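(* Let $Y,\widetilde Y\in\mathbb{R}^{m\times N}$ with nonzero columns $\widetilde Y_t$, $w\in\mathbb{R}^N$, $r\in\mathbb Z^+$. Run the $r$-th order data alignment: $\hat u_0=0$; for $t=1,\dots,N$, $\widetilde w_t=\langle\widetilde Y_t,\hat u_{t-1}+w_tY_t\rangle/\|\widetilde Y_t\|_2^2$ and $\hat u_t=\hat u_{t-1}+w_tY_t-\widetilde w_t\widetilde Y_t$; for $t=N+1,\dots,rN$ (with subscripts of $w,\widetilde w,Y,\widetilde Y$ taken modulo $N$, in $\{1,\dots,N\}$, and $\widetilde w_t$ on the right of the first line being its current value), $\hat v_{t-1}=\hat u_{t-1}-w_tY_t+\widetilde w_t\widetilde Y_t$, then $\widetilde w_t\leftarrow\langle\widetilde Y_t,\hat v_{t-1}+w_tY_t\rangle/\|\widetilde Y_t\|_2^2$, and $\hat u_t=\hat v_{t-1}+w_tY_t-\widetilde w_t\widetilde Y_t$. Then $$\hat u_N=\sum_{j=1}^N w_j\,P_{\widetilde Y_N^\perp}\cdots P_{\widetilde Y_{j+1}^\perp}P_{\widetilde Y_j^\perp}(Y_j)\quad\text{and}\quad \hat u_{rN}=P^{r-1}\hat u_N,$$ where $P:=P_{\widetilde Y_N^\perp}\cdots P_{\widetilde Y_2^\perp}P_{\widetilde Y_1^\perp}$. Moreover $\hat u_{rN}=Yw-\widetilde Y\widetilde w$ for the final vector $\widetilde w$.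
   Context: For nonzero $z\in\mathbb R^m$, $P_{z^\perp}=I-zz^\top/\|z\|_2^2$ is the orthogonal projection onto $\mathrm{span}(z)^\perp$. Columns of a matrix $A$ are denoted $A_j$. *)

theory Defs
  imports "HOL-Analysis.Analysis"
begin

text \<open>Columns of Y, Yt (= \<open>\<widetilde>Y\<close>) are indexed by 1..N and given as functions
  nat \<Rightarrow> real^'m; vectors w, \<open>\<widetilde>w\<close> are functions nat \<Rightarrow> real on 1..N.\<close>

definition perp_proj :: "real^'m \<Rightarrow> real^'m \<Rightarrow> real^'m" where
  "perp_proj z x = x - ((z \<bullet> x) / (norm z)\<^sup>2) *\<^sub>R z"

definition cidx :: "nat \<Rightarrow> nat \<Rightarrow> nat" where
  "cidx N t = ((t - 1) mod N) + 1"

text \<open>Apply P_{z_j}^perp first, then P_{z_{j+1}}^perp, ..., finally P_{z_k}^perp.\<close>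
definition proj_chain :: "(nat \<Rightarrow> real^'m) \<Rightarrow> nat \<Rightarrow> nat \<Rightarrow> real^'m \<Rightarrow> real^'m" where
  "proj_chain Z j k x = foldl (\<lambda>v i. perp_proj (Z i) v) x [j..<Suc k]"

text \<open>State after t steps of the r-th order data alignment: (\<open>\<hat>u_t\<close>, current \<open>\<widetilde>w\<close>).\<close>
primrec align :: "(nat \<Rightarrow> real^'m) \<Rightarrow> (nat \<Rightarrow> real^'m) \<Rightarrow> (nat \<Rightarrow> real) \<Rightarrow> nat
    \<Rightarrow> nat \<Rightarrow> (real^'m) \<times> (nat \<Rightarrow> real)" where
  "align Y Yt w N 0 = (0, (\<lambda>_. 0))"
| "align Y Yt w N (Suc t) =
     (let (u, wt) = align Y Yt w N t; j = cidx N (Suc t) in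
      if Suc t \<le> N then
        (let a = (Yt j \<bullet> (u + w j *\<^sub>R Y j)) / (norm (Yt j))\<^sup>2
         in (u + w j *\<^sub>R Y j - a *\<^sub>R Yt j, wt(j := a)))
      else
        (let v = u - w j *\<^sub>R Y j + wt j *\<^sub>R Yt j;
             a = (Yt j \<bullet> (v + w j *\<^sub>R Y j)) / (norm (Yt j))\<^sup>2
         in (v + w j *\<^sub>R Y j - a *\<^sub>R Yt j, wt(j := a))))"

end

theory Submission
  imports Defs
begin

lemma linear_perp_proj: "linear (perp_proj z)"
  unfolding perp_proj_def
  by (rule linearI) (auto simp: inner_add_right algebra_simps add_divide_distrib divide_inverse)

lemma perp_proj_shift:
  assumes "z \<noteq> 0" shows "perp_proj z (x + c *\<^sub>R z) = perp_proj z x"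
proof -
  have n: "(norm z)\<^sup>2 \<noteq> 0" using assms by simp
  have "z \<bullet> (x + c *\<^sub>R z) = z \<bullet> x + c * (norm z)\<^sup>2"
    by (simp add: inner_add_right dot_square_norm)
  hence "(z \<bullet> (x + c *\<^sub>R z)) / (norm z)\<^sup>2 = (z \<bullet> x) / (norm z)\<^sup>2 + c"
    using n by (simp add: field_simps)
  thus ?thesis unfolding perp_proj_def by (simp add: algebra_simps)
qed

lemma proj_chain_Suc:
  "j \<le> Suc k \<Longrightarrow> proj_chain Z j (Suc k) x = perp_proj (Z (Suc k)) (proj_chain Z j k x)"
  unfolding proj_chain_def by simp

lemma proj_chain_same: "proj_chain Z (Suc k) (Suc k) x = perp_proj (Z (Suc k)) x"
  unfolding proj_chain_def by simp

lemma proj_chain_zero: "proj_chain Z (Suc 0) 0 x = x"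
  unfolding proj_chain_def by simp

lemma proj_chain_empty: "proj_chain Z (Suc k) k x = x"
  unfolding proj_chain_def by simp

lemma align_step_le:
  assumes "Suc t \<le> N" "align Y Yt w N t = (u, wt)"
  shows "align Y Yt w N (Suc t) =
     (perp_proj (Yt (Suc t)) (u + w (Suc t) *\<^sub>R Y (Suc t)),
      wt(Suc t := (Yt (Suc t) \<bullet> (u + w (Suc t) *\<^sub>R Y (Suc t))) / (norm (Yt (Suc t)))\<^sup>2))"
proof -
  have c: "cidx N (Suc t) = Suc t" using assms(1) unfolding cidx_def by simp
  show ?thesis using assms by (simp add: c Let_def perp_proj_def algebra_simps)
qed

lemma align_step_gt:
  assumes "\<not> Suc t \<le> N" "align Y Yt w N t = (u, wt)" "j = cidx N (Suc t)"
  shows "align Y Yt w N (Suc t) =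
     (u + wt j *\<^sub>R Yt j - ((Yt j \<bullet> (u + wt j *\<^sub>R Yt j)) / (norm (Yt j))\<^sup>2) *\<^sub>R Yt j,
      wt(j := (Yt j \<bullet> (u + wt j *\<^sub>R Yt j)) / (norm (Yt j))\<^sup>2))"
  using assms by (simp add: Let_def algebra_simps)

lemma cidx_range: "N \<ge> 1 \<Longrightarrow> cidx N t \<in> {1..N}"
  unfolding cidx_def by (simp add: Suc_leI)

lemma sum_upd:
  assumes "finite A" "j \<in> A"
  shows "(\<Sum>i\<in>A. (wt(j := a)) i *\<^sub>R (Z i :: real^'m)) = (\<Sum>i\<in>A. wt i *\<^sub>R Z i) - wt j *\<^sub>R Z j + a *\<^sub>R Z j"
proof -
  have "(\<Sum>i\<in>A. (wt(j := a)) i *\<^sub>R Z i) = a *\<^sub>R Z j + (\<Sum>i\<in>A - {j}. wt i *\<^sub>R Z i)"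
    using assms by (simp add: sum.remove)
  moreover have "(\<Sum>i\<in>A. wt i *\<^sub>R Z i) = wt j *\<^sub>R Z j + (\<Sum>i\<in>A - {j}. wt i *\<^sub>R Z i)"
    using assms by (simp add: sum.remove)
  ultimately show ?thesis by simp
qed

lemma first_phase:
  assumes "\<forall>j\<in>{1..N}. Yt j \<noteq> 0"
  shows "t \<le> N \<Longrightarrow> fst (align Y Yt w N t) = (\<Sum>j=1..t. w j *\<^sub>R proj_chain Yt j t (Y j))
     \<and> fst (align Y Yt w N t) = (\<Sum>j=1..t. w j *\<^sub>R Y j) - (\<Sum>j=1..N. snd (align Y Yt w N t) j *\<^sub>R Yt j)
     \<and> (\<forall>j\<in>{Suc t..N}. snd (align Y Yt w N t) j = 0)"
proof (induction t)
  case 0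
  then show ?case by simp
next
  case (Suc t)
  obtain u wt where uw: "align Y Yt w N t = (u, wt)" by (cases "align Y Yt w N t") auto
  from Suc uw have IH: "u = (\<Sum>j=1..t. w j *\<^sub>R proj_chain Yt j t (Y j))"
    "u = (\<Sum>j=1..t. w j *\<^sub>R Y j) - (\<Sum>j=1..N. wt j *\<^sub>R Yt j)"
    "\<forall>j\<in>{Suc t..N}. wt j = 0" by auto
  define a where "a = (Yt (Suc t) \<bullet> (u + w (Suc t) *\<^sub>R Y (Suc t))) / (norm (Yt (Suc t)))\<^sup>2"
  have st: "align Y Yt w N (Suc t) = (perp_proj (Yt (Suc t)) (u + w (Suc t) *\<^sub>R Y (Suc t)), wt(Suc t := a))"
    using align_step_le[OF Suc.prems uw] a_def by simp
  have L: "linear (perp_proj (Yt (Suc t)))" by (rule linear_perp_proj)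
  have "perp_proj (Yt (Suc t)) (u + w (Suc t) *\<^sub>R Y (Suc t))
     = (\<Sum>j=1..t. w j *\<^sub>R perp_proj (Yt (Suc t)) (proj_chain Yt j t (Y j))) + w (Suc t) *\<^sub>R perp_proj (Yt (Suc t)) (Y (Suc t))"
    unfolding IH(1) by (simp add: linear_add[OF L] linear_sum[OF L] linear_scale[OF L])
  also have "\<dots> = (\<Sum>j=1..Suc t. w j *\<^sub>R proj_chain Yt j (Suc t) (Y j))"
    by (simp add: proj_chain_Suc proj_chain_empty)
  finally have A: "perp_proj (Yt (Suc t)) (u + w (Suc t) *\<^sub>R Y (Suc t)) = (\<Sum>j=1..Suc t. w j *\<^sub>R proj_chain Yt j (Suc t) (Y j))" .
  have wz: "wt (Suc t) = 0" using IH(3) Suc.prems by auto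
  have B: "perp_proj (Yt (Suc t)) (u + w (Suc t) *\<^sub>R Y (Suc t)) = (\<Sum>j=1..Suc t. w j *\<^sub>R Y j) - (\<Sum>j=1..N. (wt(Suc t := a)) j *\<^sub>R Yt j)"
  proof -
    have s: "(\<Sum>j=1..N. (wt(Suc t := a)) j *\<^sub>R Yt j) = (\<Sum>j=1..N. wt j *\<^sub>R Yt j) + a *\<^sub>R Yt (Suc t)"
      using Suc.prems sum_upd[of "{1..N}" "Suc t" wt a Yt] wz by simp
    have p: "perp_proj (Yt (Suc t)) (u + w (Suc t) *\<^sub>R Y (Suc t)) = u + w (Suc t) *\<^sub>R Y (Suc t) - a *\<^sub>R Yt (Suc t)"
      unfolding perp_proj_def a_def by simp
    show ?thesis unfolding p s using IH(2) by (simp add: algebra_simps)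
  qed
  show ?case using A B IH(3) st by auto
qed

lemma step_gt:
  assumes "N \<ge> 1" "\<forall>j\<in>{1..N}. Yt j \<noteq> 0" "\<not> Suc t \<le> N"
  shows "fst (align Y Yt w N (Suc t)) = perp_proj (Yt (cidx N (Suc t))) (fst (align Y Yt w N t))"
    "snd (align Y Yt w N (Suc t)) = (snd (align Y Yt w N t))(cidx N (Suc t) :=
        (Yt (cidx N (Suc t)) \<bullet> (fst (align Y Yt w N t) + snd (align Y Yt w N t) (cidx N (Suc t)) *\<^sub>R Yt (cidx N (Suc t)))) / (norm (Yt (cidx N (Suc t))))\<^sup>2)"
proof -
  obtain u wt where uw: "align Y Yt w N t = (u, wt)" by (cases "align Y Yt w N t") auto
  define j where "j = cidx N (Suc t)"
  have nz: "Yt j \<noteq> 0" using assms cidx_range[of N] j_def by auto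
  note st = align_step_gt[OF assms(3) uw j_def]
  have "u + wt j *\<^sub>R Yt j - ((Yt j \<bullet> (u + wt j *\<^sub>R Yt j)) / (norm (Yt j))\<^sup>2) *\<^sub>R Yt j
      = perp_proj (Yt j) (u + wt j *\<^sub>R Yt j)" by (simp add: perp_proj_def)
  also have "\<dots> = perp_proj (Yt j) u" by (rule perp_proj_shift[OF nz])
  finally show "fst (align Y Yt w N (Suc t)) = perp_proj (Yt (cidx N (Suc t))) (fst (align Y Yt w N t))"
    using st uw j_def by simp
  show "snd (align Y Yt w N (Suc t)) = (snd (align Y Yt w N t))(cidx N (Suc t) :=
        (Yt (cidx N (Suc t)) \<bullet> (fst (align Y Yt w N t) + snd (align Y Yt w N t) (cidx N (Suc t)) *\<^sub>R Yt (cidx N (Suc t)))) / (norm (Yt (cidx N (Suc t))))\<^sup>2)"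
    using st uw j_def by simp
qed

lemma second_inv:
  assumes "N \<ge> 1" "\<forall>j\<in>{1..N}. Yt j \<noteq> 0"
  shows "N \<le> t \<Longrightarrow> fst (align Y Yt w N t) = (\<Sum>j=1..N. w j *\<^sub>R Y j) - (\<Sum>j=1..N. snd (align Y Yt w N t) j *\<^sub>R Yt j)"
proof (induction t rule: dec_induct)
  case base
  then show ?case using first_phase[of N Yt N Y w] assms by auto
next
  case (step t)
  define j where "j = cidx N (Suc t)"
  have jr: "j \<in> {1..N}" using cidx_range[OF assms(1)] j_def by auto
  have ns: "\<not> Suc t \<le> N" using step by auto
  note S = step_gt[OF assms ns, of Y w, folded j_def]
  define u where "u = fst (align Y Yt w N t)"
  define wt where "wt = snd (align Y Yt w N t)"
  define a where "a = (Yt j \<bullet> (u + wt j *\<^sub>R Yt j)) / (norm (Yt j))\<^sup>2"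
  have "fst (align Y Yt w N (Suc t)) = u + wt j *\<^sub>R Yt j - a *\<^sub>R Yt j"
    unfolding S(1) perp_proj_def a_def u_def wt_def
    using perp_proj_shift[of "Yt j" "fst (align Y Yt w N t)" "snd (align Y Yt w N t) j"] jr assms(2)
    by (simp add: perp_proj_def)
  also have "\<dots> = (\<Sum>j=1..N. w j *\<^sub>R Y j) - (\<Sum>i=1..N. (wt(j:=a)) i *\<^sub>R Yt i)"
    using jr step.IH sum_upd[of "{1..N}" j wt a Yt] by (simp add: u_def wt_def algebra_simps)
  finally show ?case using S(2) a_def u_def wt_def by simp
qed

lemma cidx_mod: "N \<ge> 1 \<Longrightarrow> i < N \<Longrightarrow> cidx N (k * N + Suc i) = Suc i"
  unfolding cidx_def by simp

lemma cyc:
  assumes "N \<ge> 1" "\<forall>j\<in>{1..N}. Yt j \<noteq> 0"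
  shows "i \<le> N \<Longrightarrow> fst (align Y Yt w N (Suc k * N + i)) = proj_chain Yt 1 i ((proj_chain Yt 1 N ^^ k) (fst (align Y Yt w N N)))"
proof (induction k arbitrary: i)
  case 0
  show ?case using 0
  proof (induction i)
    case 0 then show ?case by (simp add: proj_chain_zero)
  next
    case (Suc i)
    have "fst (align Y Yt w N (Suc 0 * N + Suc i)) = perp_proj (Yt (cidx N (Suc (N + i)))) (fst (align Y Yt w N (N + i)))"
      using step_gt[OF assms, of "N + i" Y w] by simp
    also have "cidx N (Suc (N + i)) = Suc i" using cidx_mod[OF assms(1), of i 1] Suc.prems by simp
    finally show ?case using Suc by (simp add: proj_chain_Suc)
  qed
next
  case (Suc k)
  show ?case using Suc.prems
  proof (induction i)
    case 0
    have "fst (align Y Yt w N (Suc (Suc k) * N + 0)) = fst (align Y Yt w N (Suc k * N + N))"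
      by (simp add: algebra_simps)
    also have "\<dots> = proj_chain Yt 1 N ((proj_chain Yt 1 N ^^ k) (fst (align Y Yt w N N)))"
      using Suc.IH[of N] by simp
    finally show ?case by (simp add: proj_chain_zero)
  next
    case (Suc i)
    have "fst (align Y Yt w N (Suc (Suc k) * N + Suc i)) = perp_proj (Yt (cidx N (Suc (Suc (Suc k) * N + i)))) (fst (align Y Yt w N (Suc (Suc k) * N + i)))"
      using step_gt[OF assms, of "Suc (Suc k) * N + i" Y w] assms(1) by simp
    also have "cidx N (Suc (Suc (Suc k) * N + i)) = Suc i" using cidx_mod[OF assms(1), of i "Suc (Suc k)"] Suc.prems by simp
    finally show ?case using Suc by (simp add: proj_chain_Suc)
  qed
qed

theorem mainTheorem3:
  fixes Y Yt :: "nat \<Rightarrow> real^'m" and w :: "nat \<Rightarrow> real" and N r :: nat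
  assumes "N \<ge> 1" and "r \<ge> 1"
    and "\<forall>j\<in>{1..N}. Yt j \<noteq> 0"
  shows "fst (align Y Yt w N N) = (\<Sum>j=1..N. w j *\<^sub>R proj_chain Yt j N (Y j))
       \<and> fst (align Y Yt w N (r * N)) = ((proj_chain Yt 1 N) ^^ (r - 1)) (fst (align Y Yt w N N))
       \<and> fst (align Y Yt w N (r * N)) =
           (\<Sum>j=1..N. w j *\<^sub>R Y j) - (\<Sum>j=1..N. snd (align Y Yt w N (r * N)) j *\<^sub>R Yt j)"
proof (intro conjI)
  show "fst (align Y Yt w N N) = (\<Sum>j=1..N. w j *\<^sub>R proj_chain Yt j N (Y j))"
    using first_phase[of N Yt N Y w] assms by auto
  have rN: "r * N = Suc (r - 1) * N + 0" using assms(2) by simp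
  show "fst (align Y Yt w N (r * N)) = ((proj_chain Yt 1 N) ^^ (r - 1)) (fst (align Y Yt w N N))"
    unfolding rN using cyc[OF assms(1,3), of 0 Y w "r - 1"] by (simp add: proj_chain_zero)
  show "fst (align Y Yt w N (r * N)) =
           (\<Sum>j=1..N. w j *\<^sub>R Y j) - (\<Sum>j=1..N. snd (align Y Yt w N (r * N)) j *\<^sub>R Yt j)"
    using second_inv[OF assms(1,3)] assms(2) by simp
qed

end
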